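(* For $n,m\ge 0$ let $f(n,m)$ be the number of linked cycles $\hat\pi$ on $[n]$ with exactly $m$ singly covered minimal elements. Then $f(1,1)=1$, $f(n,0)=0$ for $n\ge1$, $f(n,m)=0$ if $n<m$, and for all $n\ge2$, $m\ge1$, $$f(n,m)=(2(n-1)-m)f(n-1,m)+f(n-1,m-1).$$
   Context: Two finite sets of integers $E,F$ are nearly disjoint if for every $i\in E\cap F$ either ($i=\min(E)$, $|E|>1$, $i\ne\min(F)$) or ($i=\min(F)$, $|F|>1$, $i\ne\min(E)$). A linked partition of $[n]$ is a set of nonempty subsets (blocks) of $[n]$ with union $[n]$, any two distinct blocks nearly disjoint; each element lies in one or two blocks (singly/doubly covered). A singly covered minimal element is a singly covered element that is the minimum of its block. A linked cycle on $[n]$ is a linked partition of $[n]$ together with a cyclic arrangement of the elements of each block (two linked cycles differ if the partitions or some cyclic arrangement differ). *)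

theory Defs
  imports Main
begin

definition nearly_disjoint :: "'a::linorder set \<Rightarrow> 'a set \<Rightarrow> bool" where
  "nearly_disjoint E F \<longleftrightarrow>
     (\<forall>i\<in>E \<inter> F. (i = Min E \<and> card E > 1 \<and> i \<noteq> Min F)
                 \<or> (i = Min F \<and> card F > 1 \<and> i \<noteq> Min E))"

definition linked_partition :: "nat \<Rightarrow> nat set set \<Rightarrow> bool" where
  "linked_partition n P \<longleftrightarrow>
     (\<forall>B\<in>P. B \<noteq> {} \<and> B \<subseteq> {1..n}) \<and> \<Union>P = {1..n} \<and>
     (\<forall>E\<in>P. \<forall>F\<in>P. E \<noteq> F \<longrightarrow> nearly_disjoint E F)"

definition cyclic_arrangement :: "'a set \<Rightarrow> 'a list set \<Rightarrow> bool" where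
  "cyclic_arrangement B C \<longleftrightarrow>
     (\<exists>xs. distinct xs \<and> set xs = B \<and> C = {rotate k xs | k. True})"

definition linked_cycle :: "nat \<Rightarrow> nat set set \<Rightarrow> (nat set \<Rightarrow> nat list set) \<Rightarrow> bool" where
  "linked_cycle n P A \<longleftrightarrow> linked_partition n P \<and>
     (\<forall>B\<in>P. cyclic_arrangement B (A B)) \<and> (\<forall>B. B \<notin> P \<longrightarrow> A B = {})"

definition singly_covered_minimal :: "nat \<Rightarrow> nat set set \<Rightarrow> nat set" where
  "singly_covered_minimal n P =
     {i \<in> {1..n}. card {B \<in> P. i \<in> B} = 1 \<and> (\<forall>B\<in>P. i \<in> B \<longrightarrow> i = Min B)}"

definition f_lc :: "nat \<Rightarrow> nat \<Rightarrow> nat" where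
  "f_lc n m = card {(P, A). linked_cycle n P A \<and> card (singly_covered_minimal n P) = m}"

end

theory Submission
  imports Defs "HOL-Combinatorics.Multiset_Permutations" "HOL-Library.FuncSet"
begin


definition rots :: "'a list \<Rightarrow> 'a list set" where
  "rots xs = {rotate k xs | k. True}"

lemma rot_head_id:
  assumes "distinct l" "l \<noteq> []" "hd (rotate j l) = hd l"
  shows "rotate j l = l"
proof -
  have "l ! (j mod length l) = l ! 0" using assms hd_rotate_conv_nth[of l j] by (simp add: hd_conv_nth)
  then have "j mod length l = 0" using assms nth_eq_iff_index_eq by fastforce
  then show ?thesis by simp
qed

lemma rots_rotate: "rots (rotate j xs) = rots xs"
proof (cases "xs = []")
  case True then show ?thesis by (simp add: rots_def)
next
  case False
  show ?thesis unfolding rots_def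
  proof (safe)
    fix k show "\<exists>k'. rotate k (rotate j xs) = rotate k' xs \<and> True" by (auto simp: rotate_rotate)
  next
    fix k
    let ?L = "length xs"
    have "rotate (k + ?L - j mod ?L) (rotate (j mod ?L) xs) = rotate (k + ?L) xs"
      using False by (simp add: rotate_rotate le_add2 less_imp_le_nat order_trans[OF less_imp_le_nat[OF mod_less_divisor]])
    also have "\<dots> = rotate k xs" using rotate_conv_mod[of "k + ?L" xs] rotate_conv_mod[of k xs] by simp
    finally show "\<exists>k'. rotate k xs = rotate k' (rotate j xs) \<and> True"
      by (metis rotate_conv_mod)
  qed
qed

lemma ca_bij:
  fixes B :: "'a::linorder set"
  assumes "finite B" "B \<noteq> {}"
  shows "bij_betw (\<lambda>xs. rots (Min B # xs)) (permutations_of_set (B - {Min B})) {C. cyclic_arrangement B C}"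
proof -
  let ?a = "Min B"
  have aB: "?a \<in> B" using assms by simp
  show ?thesis
  proof (rule bij_betwI')
    fix xs ys assume xs: "xs \<in> permutations_of_set (B - {?a})" and ys: "ys \<in> permutations_of_set (B - {?a})"
    show "(rots (?a # xs) = rots (?a # ys)) = (xs = ys)"
    proof
      assume eq: "rots (?a # xs) = rots (?a # ys)"
      have "?a # xs \<in> rots (?a # ys)" using eq unfolding rots_def by (smt (verit, ccfv_threshold) id_apply mem_Collect_eq rotate0)
      then obtain j where j: "?a # xs = rotate j (?a # ys)" unfolding rots_def by auto
      have d: "distinct (?a # ys)" using ys by (auto simp: permutations_of_set_def)
      have "rotate j (?a # ys) = ?a # ys" using rot_head_id[OF d, of j] j by (metis list.sel(1) list.simps(3))
      then show "xs = ys" using j by simp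
    qed simp
  next
    fix xs assume xs: "xs \<in> permutations_of_set (B - {?a})"
    then have "distinct (?a # xs)" "set (?a # xs) = B" using aB unfolding permutations_of_set_def by auto
    then show "rots (?a # xs) \<in> {C. cyclic_arrangement B C}"
      unfolding cyclic_arrangement_def rots_def by blast
  next
    fix C assume "C \<in> {C. cyclic_arrangement B C}"
    then obtain zs where zs: "distinct zs" "set zs = B" "C = rots zs"
      unfolding cyclic_arrangement_def rots_def by auto
    obtain j where j: "j < length zs" "zs ! j = ?a" using aB zs by (metis in_set_conv_nth)
    have ne: "zs \<noteq> []" using zs assms by auto
    have "hd (rotate j zs) = ?a" using hd_rotate_conv_nth[OF ne, of j] j by simp
    then obtain ws where ws: "rotate j zs = ?a # ws" using ne by (metis list.collapse rotate_is_Nil_conv)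
    have "distinct (?a # ws)" "set (?a # ws) = B" using zs ws by (metis distinct_rotate, metis set_rotate)
    then have "ws \<in> permutations_of_set (B - {?a})" unfolding permutations_of_set_def by auto
    moreover have "C = rots (?a # ws)" using zs ws rots_rotate by metis
    ultimately show "\<exists>xs\<in>permutations_of_set (B - {?a}). C = rots (?a # xs)" by blast
  qed
qed

lemma ca_card:
  fixes B :: "'a::linorder set"
  assumes "finite B" "B \<noteq> {}"
  shows "card {C. cyclic_arrangement B C} = fact (card B - 1)"
    and "finite {C. cyclic_arrangement B C}"
proof -
  have "card {C. cyclic_arrangement B C} = card (permutations_of_set (B - {Min B}))"
    using bij_betw_same_card[OF ca_bij[OF assms]] by simp
  then show "card {C. cyclic_arrangement B C} = fact (card B - 1)" using assms by simp
  show "finite {C. cyclic_arrangement B C}" using bij_betw_finite[OF ca_bij[OF assms]] by simp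
qed



lemma nd_sym: "nearly_disjoint E F = nearly_disjoint F E"
  unfolding nearly_disjoint_def by blast

lemma lp_block: "linked_partition n P \<Longrightarrow> B \<in> P \<Longrightarrow> B \<noteq> {} \<and> B \<subseteq> {1..n} \<and> finite B"
proof -
  assume a: "linked_partition n P" "B \<in> P"
  then have "B \<noteq> {} \<and> B \<subseteq> {1..n}" unfolding linked_partition_def by blast
  moreover then have "finite B" using finite_subset by blast
  ultimately show ?thesis by blast
qed

lemma lp_finite: "linked_partition n P \<Longrightarrow> finite P"
proof -
  assume a: "linked_partition n P"
  have "P \<subseteq> Pow {1..n}" using lp_block[OF a] by auto
  then show ?thesis by (meson finite_Pow_iff finite_atLeastAtMost finite_subset)
qed

lemma lp_nd: "linked_partition n P \<Longrightarrow> E \<in> P \<Longrightarrow> F \<in> P \<Longrightarrow> E \<noteq> F \<Longrightarrow> i \<in> E \<Longrightarrow> i \<in> F \<Longrightarrow>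
   (i = Min E \<and> card E > 1 \<and> i \<noteq> Min F) \<or> (i = Min F \<and> card F > 1 \<and> i \<noteq> Min E)"
  unfolding linked_partition_def nearly_disjoint_def by blast

lemma lp_three: "linked_partition n P \<Longrightarrow> E \<in> P \<Longrightarrow> F \<in> P \<Longrightarrow> G \<in> P \<Longrightarrow> E \<noteq> F \<Longrightarrow> E \<noteq> G \<Longrightarrow> F \<noteq> G
   \<Longrightarrow> i \<in> E \<Longrightarrow> i \<in> F \<Longrightarrow> i \<in> G \<Longrightarrow> False"
proof -
  assume a: "linked_partition n P" "E \<in> P" "F \<in> P" "G \<in> P" "E \<noteq> F" "E \<noteq> G" "F \<noteq> G"
     "i \<in> E" "i \<in> F" "i \<in> G"
  have 1: "(i = Min E) \<noteq> (i = Min F)" using lp_nd[of n P E F i] a by blast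
  have 2: "(i = Min E) \<noteq> (i = Min G)" using lp_nd[of n P E G i] a by blast
  have 3: "(i = Min F) \<noteq> (i = Min G)" using lp_nd[of n P F G i] a by blast
  from 1 2 3 show False by blast
qed

lemma min_is_max: "finite E \<Longrightarrow> E \<subseteq> {1..n} \<Longrightarrow> (n::nat) \<in> E \<Longrightarrow> n = Min E \<Longrightarrow> E = {n}"
proof -
  assume a: "finite E" "E \<subseteq> {1..n}" "n \<in> E" "n = Min E"
  have "x = n" if "x \<in> E" for x
  proof -
    have "Min E \<le> x" using Min_le[OF a(1) that] .
    moreover have "x \<le> n" using a(2) that by auto
    ultimately show ?thesis using a(4) by simp
  qed
  then show ?thesis using a(3) by blast
qed

lemma lp_max_unique: "linked_partition n P \<Longrightarrow> B \<in> P \<Longrightarrow> n \<in> B \<Longrightarrow> C \<in> P \<Longrightarrow> n \<in> C \<Longrightarrow> B = C"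
proof (rule ccontr)
  assume a: "linked_partition n P" "B \<in> P" "n \<in> B" "C \<in> P" "n \<in> C" "B \<noteq> C"
  have fB: "finite B" "B \<subseteq> {1..n}" and fC: "finite C" "C \<subseteq> {1..n}" using lp_block a by auto
  from lp_nd[OF a(1,2,4,6,3,5)] show False
  proof
    assume h: "n = Min B \<and> 1 < card B \<and> n \<noteq> Min C"
    then have "B = {n}" using min_is_max[OF fB a(3)] by blast
    then have "card B = 1" by simp
    then show False using h by linarith
  next
    assume h: "n = Min C \<and> 1 < card C \<and> n \<noteq> Min B"
    then have "C = {n}" using min_is_max[OF fC a(5)] by blast
    then have "card C = 1" by simp
    then show False using h by linarith
  qed
qed

lemma lp_cover:
  assumes lp: "linked_partition n P" and i: "i \<in> {1..n}"
  shows "card {B\<in>P. i\<in>B} = 1 \<or> card {B\<in>P. i\<in>B} = 2"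
proof -
  let ?S = "{B\<in>P. i\<in>B}"
  have fin: "finite ?S" using lp_finite[OF lp] by simp
  have ne: "?S \<noteq> {}" using lp i unfolding linked_partition_def by auto
  have le: "card ?S \<le> 2"
  proof (rule ccontr)
    assume "\<not> card ?S \<le> 2"
    then have "3 \<le> card ?S" by simp
    then obtain T where T: "T \<subseteq> ?S" "card T = 3" by (rule obtain_subset_with_card_n)
    then obtain E F G where "T = {E,F,G}" "E \<noteq> F" "E \<noteq> G" "F \<noteq> G" using card_3_iff[of T] T(2) by auto
    then have "E \<in> ?S" "F \<in> ?S" "G \<in> ?S" "E \<noteq> F" "E \<noteq> G" "F \<noteq> G" using T by auto
    then show False using lp_three[OF lp] by blast
  qed
  have "card ?S \<noteq> 0" using fin ne by simp
  then show ?thesis using le by linarith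
qed

lemma singleton_block: "linked_partition n P \<Longrightarrow> {b} \<in> P \<Longrightarrow> F \<in> P \<Longrightarrow> b \<in> F \<Longrightarrow> F = {b}"
proof (rule ccontr)
  assume a: "linked_partition n P" "{b} \<in> P" "F \<in> P" "b \<in> F" "F \<noteq> {b}"
  show False using lp_nd[OF a(1,2,3) a(5)[symmetric], of b] a(4) by simp
qed



datatype ins = New | Into "nat set" | Pr nat

definition ext :: "nat \<Rightarrow> nat set set \<Rightarrow> ins \<Rightarrow> nat set set" where
  "ext n Q x = (case x of New \<Rightarrow> insert {n} Q
      | Into B \<Rightarrow> insert (insert n B) (Q - {B})
      | Pr b \<Rightarrow> insert {b, n} Q)"

definition Sng :: "nat \<Rightarrow> nat set set \<Rightarrow> nat set" where
  "Sng k Q = {i\<in>{1..k}. card {B\<in>Q. i\<in>B} = 1 \<and> \<not> (\<forall>B\<in>Q. i\<in>B \<longrightarrow> i = Min B)}"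

definition Idx :: "nat \<Rightarrow> nat set set \<Rightarrow> ins set" where
  "Idx k Q = insert New (Into ` Q \<union> Pr ` Sng k Q)"

definition blk :: "nat \<Rightarrow> nat set set \<Rightarrow> nat set" where
  "blk n P = (THE B. B \<in> P \<and> n \<in> B)"

definition dec :: "nat \<Rightarrow> nat set set \<Rightarrow> nat set set \<times> ins" where
  "dec n P = (let Bn = blk n P in
     if Bn = {n} then (P - {Bn}, New)
     else if card Bn = 2 \<and> (\<exists>F\<in>P. F \<noteq> Bn \<and> Min Bn \<in> F) then (P - {Bn}, Pr (Min Bn))
     else ((\<lambda>C. C - {n}) ` P, Into (Bn - {n})))"

lemma blk_eq: "B \<in> P \<Longrightarrow> n \<in> B \<Longrightarrow> (\<And>C. C \<in> P \<Longrightarrow> n \<in> C \<Longrightarrow> C = B) \<Longrightarrow> blk n P = B"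
proof -
  assume a: "B \<in> P" "n \<in> B" "\<And>C. C \<in> P \<Longrightarrow> n \<in> C \<Longrightarrow> C = B"
  show ?thesis unfolding blk_def
  proof (rule the_equality)
    show "B \<in> P \<and> n \<in> B" using a(1,2) by simp
    fix C assume "C \<in> P \<and> n \<in> C"
    then show "C = B" by (intro a(3)) simp_all
  qed
qed

lemma sng_D:
  assumes "b \<in> Sng k Q"
  shows "b \<in> {1..k}" "\<exists>F\<in>Q. b \<in> F \<and> b \<noteq> Min F \<and> (\<forall>G\<in>Q. b \<in> G \<longrightarrow> G = F)"
proof -
  show "b \<in> {1..k}" using assms unfolding Sng_def by blast
  have c: "card {B\<in>Q. b\<in>B} = 1" and nm: "\<not> (\<forall>B\<in>Q. b\<in>B \<longrightarrow> b = Min B)" using assms unfolding Sng_def by auto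
  from c obtain F where F: "{B\<in>Q. b\<in>B} = {F}" using card_1_singleton_iff[of "{B\<in>Q. b\<in>B}"] by (auto simp del: One_nat_def)
  then have FQ: "F \<in> Q" "b \<in> F" and uq: "\<forall>G\<in>Q. b \<in> G \<longrightarrow> G = F" by (blast, blast, blast)
  from nm obtain B where "B \<in> Q" "b \<in> B" "b \<noteq> Min B" by blast
  with uq have "b \<noteq> Min F" by blast
  with FQ uq show "\<exists>F\<in>Q. b \<in> F \<and> b \<noteq> Min F \<and> (\<forall>G\<in>Q. b \<in> G \<longrightarrow> G = F)" by blast
qed

lemma sng_I:
  assumes "b \<in> {1..k}" "F \<in> Q" "b \<in> F" "b \<noteq> Min F" "\<And>G. G \<in> Q \<Longrightarrow> b \<in> G \<Longrightarrow> G = F"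
  shows "b \<in> Sng k Q"
proof -
  have "{B\<in>Q. b\<in>B} = {F}" using assms by blast
  then have "card {B\<in>Q. b\<in>B} = 1" by simp
  moreover have "\<not> (\<forall>B\<in>Q. b\<in>B \<longrightarrow> b = Min B)" using assms(2,3,4) by blast
  ultimately show ?thesis unfolding Sng_def using assms(1) by blast
qed

lemma nd_empty: "E \<inter> F = {} \<Longrightarrow> nearly_disjoint E F"
  unfolding nearly_disjoint_def by blast

lemma min_insert_big:
  assumes "finite B" "B \<noteq> {}" "\<forall>x\<in>B. x < (n::nat)"
  shows "Min (insert n B) = Min B"
proof -
  have "Min B \<in> B" using assms by simp
  then have "Min B < n" using assms by blast
  then show ?thesis using Min_insert[OF assms(1,2), of n] by simp
qed

lemma lp_small:
  assumes "linked_partition k Q" "B \<in> Q"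
  shows "\<forall>x\<in>B. x < Suc k" "Suc k \<notin> B" "finite B" "B \<noteq> {}"
  using lp_block[OF assms] by auto

lemma lp_mem: "linked_partition k Q \<Longrightarrow> B \<in> Q \<Longrightarrow> x \<in> B \<Longrightarrow> 1 \<le> x \<and> x \<le> k"
  using lp_block by fastforce

lemma lp_up: "linked_partition k Q \<Longrightarrow> \<forall>B\<in>Q. B \<noteq> {} \<and> B \<subseteq> {1..Suc k}"
proof
  fix B assume a: "linked_partition k Q" "B \<in> Q"
  have "{1..k} \<subseteq> {1..Suc k}" by auto
  then show "B \<noteq> {} \<and> B \<subseteq> {1..Suc k}" using lp_block[OF a] by blast
qed

lemma ext_new_lp:
  assumes lp: "linked_partition k Q"
  shows "linked_partition (Suc k) (insert {Suc k} Q)"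
proof -
  have b: "\<forall>B\<in>insert {Suc k} Q. B \<noteq> {} \<and> B \<subseteq> {1..Suc k}" using lp_up[OF lp] by simp
  have u: "\<Union>(insert {Suc k} Q) = {1..Suc k}" using lp unfolding linked_partition_def by auto
  have nd: "\<forall>E\<in>insert {Suc k} Q. \<forall>F\<in>insert {Suc k} Q. E \<noteq> F \<longrightarrow> nearly_disjoint E F"
  proof (intro ballI impI)
    fix E F assume E: "E \<in> insert {Suc k} Q" and F: "F \<in> insert {Suc k} Q" and ne: "E \<noteq> F"
    show "nearly_disjoint E F"
    proof (cases "E \<in> Q \<and> F \<in> Q")
      case True then show ?thesis using lp ne unfolding linked_partition_def by blast
    next
      case False
      then have "E \<inter> F = {}" using E F ne lp_small[OF lp] by auto
      then show ?thesis by (rule nd_empty)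
    qed
  qed
  show ?thesis unfolding linked_partition_def using b u nd by blast
qed

lemma ext_into_lp:
  assumes lp: "linked_partition k Q" and BQ: "B \<in> Q"
  shows "linked_partition (Suc k) (insert (insert (Suc k) B) (Q - {B}))"
proof -
  let ?n = "Suc k"
  let ?P = "insert (insert ?n B) (Q - {B})"
  have b: "\<forall>C\<in>?P. C \<noteq> {} \<and> C \<subseteq> {1..?n}" using lp_up[OF lp] BQ by simp
  have "\<Union>?P = insert ?n (\<Union>Q)" using BQ by blast
  then have u: "\<Union>?P = {1..?n}" using lp unfolding linked_partition_def by auto
  have fB: "finite B" "B \<noteq> {}" "\<forall>x\<in>B. x < ?n" "?n \<notin> B" using lp_small[OF lp BQ] by auto
  have mB: "Min (insert ?n B) = Min B" using min_insert_big fB by blast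
  have cB: "card (insert ?n B) = card B + 1" using fB by simp
  have key: "nearly_disjoint (insert ?n B) F" if F: "F \<in> Q" "F \<noteq> B" for F
  proof -
    have nF: "?n \<notin> F" using lp_small[OF lp F(1)] by auto
    show ?thesis unfolding nearly_disjoint_def
    proof
      fix i assume i: "i \<in> insert ?n B \<inter> F"
      then have iB: "i \<in> B" "i \<in> F" using nF by auto
      from lp_nd[OF lp BQ F(1) F(2)[symmetric] iB] show
        "i = Min (insert ?n B) \<and> 1 < card (insert ?n B) \<and> i \<noteq> Min F \<or>
         i = Min F \<and> 1 < card F \<and> i \<noteq> Min (insert ?n B)"
        using mB cB fB by (auto simp: card_gt_0_iff)
    qed
  qed
  have nd: "\<forall>E\<in>?P. \<forall>F\<in>?P. E \<noteq> F \<longrightarrow> nearly_disjoint E F"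
  proof (intro ballI impI)
    fix E F assume E: "E \<in> ?P" and F: "F \<in> ?P" and ne: "E \<noteq> F"
    show "nearly_disjoint E F"
    proof (cases "E \<in> Q - {B} \<and> F \<in> Q - {B}")
      case True then show ?thesis using lp ne unfolding linked_partition_def by blast
    next
      case False
      then have "(E = insert ?n B \<and> F \<in> Q - {B}) \<or> (F = insert ?n B \<and> E \<in> Q - {B})"
        using E F ne by blast
      then show ?thesis using key nd_sym by blast
    qed
  qed
  show ?thesis unfolding linked_partition_def using b u nd by blast
qed

lemma ext_pr_lp:
  assumes lp: "linked_partition k Q" and bS: "b \<in> Sng k Q"
  shows "linked_partition (Suc k) (insert {b, Suc k} Q)"
proof -
  let ?n = "Suc k"
  let ?P = "insert {b, ?n} Q"
  have bk: "b \<in> {1..k}" using sng_D[OF bS] by blast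
  obtain F0 where F0: "F0 \<in> Q" "b \<in> F0" "b \<noteq> Min F0" "\<forall>G\<in>Q. b \<in> G \<longrightarrow> G = F0"
    using sng_D[OF bS] by blast
  have b: "\<forall>C\<in>?P. C \<noteq> {} \<and> C \<subseteq> {1..?n}" using lp_up[OF lp] bk by simp
  have u: "\<Union>?P = {1..?n}" using lp bk unfolding linked_partition_def by auto
  have mb: "Min {b, ?n} = b" using bk by auto
  have cb: "card {b, ?n} = 2" using bk by auto
  have key: "nearly_disjoint {b, ?n} F" if F: "F \<in> Q" for F
  proof -
    have nF: "?n \<notin> F" using lp_small[OF lp F] by auto
    show ?thesis unfolding nearly_disjoint_def
    proof
      fix i assume i: "i \<in> {b, ?n} \<inter> F"
      then have ib: "i = b" using nF by blast
      then have "F = F0" using F0(4) F i by blast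
      note ib this
      then show "i = Min {b, ?n} \<and> 1 < card {b, ?n} \<and> i \<noteq> Min F \<or>
         i = Min F \<and> 1 < card F \<and> i \<noteq> Min {b, ?n}" using mb cb F0(3) ib \<open>F = F0\<close> by simp
    qed
  qed
  have nd: "\<forall>E\<in>?P. \<forall>F\<in>?P. E \<noteq> F \<longrightarrow> nearly_disjoint E F"
  proof (intro ballI impI)
    fix E F assume E: "E \<in> ?P" and F: "F \<in> ?P" and ne: "E \<noteq> F"
    show "nearly_disjoint E F"
    proof (cases "E \<in> Q \<and> F \<in> Q")
      case True then show ?thesis using lp ne unfolding linked_partition_def by blast
    next
      case False
      then have "(E = {b, ?n} \<and> F \<in> Q) \<or> (F = {b, ?n} \<and> E \<in> Q)"
        using E F ne by blast
      then show ?thesis using key nd_sym by blast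
    qed
  qed
  show ?thesis unfolding linked_partition_def using b u nd by blast
qed

lemma ext_lp:
  assumes "linked_partition k Q" "x \<in> Idx k Q"
  shows "linked_partition (Suc k) (ext (Suc k) Q x)"
  using assms ext_new_lp ext_into_lp ext_pr_lp unfolding Idx_def ext_def by auto



lemma dec_new:
  assumes lp: "linked_partition k Q"
  shows "dec (Suc k) (ext (Suc k) Q New) = (Q, New)"
proof -
  let ?n = "Suc k"
  have nQ: "\<forall>C\<in>Q. ?n \<notin> C" using lp_small[OF lp] by blast
  have b: "blk ?n (insert {?n} Q) = {?n}"
  proof (rule blk_eq)
    fix C assume "C \<in> insert {?n} Q" "?n \<in> C"
    then show "C = {?n}" using nQ by blast
  qed auto
  have "insert {?n} Q - {{?n}} = Q" using nQ by blast
  then show ?thesis unfolding dec_def ext_def Let_def using b by simp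
qed

lemma dec_into:
  assumes lp: "linked_partition k Q" and BQ: "B \<in> Q"
  shows "dec (Suc k) (ext (Suc k) Q (Into B)) = (Q, Into B)"
proof -
  let ?n = "Suc k"
  let ?P = "insert (insert ?n B) (Q - {B})"
  have nQ: "\<forall>C\<in>Q. ?n \<notin> C" using lp_small[OF lp] by blast
  have fB: "finite B" "B \<noteq> {}" "\<forall>x\<in>B. x < ?n" "?n \<notin> B" using lp_small[OF lp BQ] by auto
  have mB: "Min (insert ?n B) = Min B" using min_insert_big fB by blast
  have b: "blk ?n ?P = insert ?n B"
  proof (rule blk_eq)
    fix C assume "C \<in> ?P" "?n \<in> C"
    then show "C = insert ?n B" using nQ by blast
  qed auto
  have c1: "insert ?n B \<noteq> {?n}" using fB by blast
  have c2: "\<not> (card (insert ?n B) = 2 \<and> (\<exists>F\<in>?P. F \<noteq> insert ?n B \<and> Min (insert ?n B) \<in> F))"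
  proof
    assume h: "card (insert ?n B) = 2 \<and> (\<exists>F\<in>?P. F \<noteq> insert ?n B \<and> Min (insert ?n B) \<in> F)"
    have "card (insert ?n B) = Suc (card B)" using fB(1,4) by simp
    then have "card B = 1" using h by simp
    then obtain y where y: "B = {y}" using card_1_singleton_iff[of B] by (auto simp del: One_nat_def)
    from h obtain F where F: "F \<in> ?P" "F \<noteq> insert ?n B" "Min (insert ?n B) \<in> F" by blast
    have FQ: "F \<in> Q" "F \<noteq> B" using F(1,2) by blast+
    have "Min (insert ?n B) = y" using mB y by simp
    then have yF: "y \<in> F" using F(3) by simp
    have "{y} \<in> Q" using BQ y by simp
    then have "F = {y}" using singleton_block[OF lp _ FQ(1) yF] by simp
    then show False using FQ(2) y by simp
  qed
  have img1: "(\<lambda>C. C - {?n}) ` (Q - {B}) = Q - {B}"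
  proof (rule image_cong[where g = id, simplified])
    fix C assume "C \<in> Q - {B}"
    then show "C - {?n} = C" using nQ by blast
  qed simp
  have img: "(\<lambda>C. C - {?n}) ` ?P = Q"
  proof -
    have "(\<lambda>C. C - {?n}) ` ?P = insert (insert ?n B - {?n}) ((\<lambda>C. C - {?n}) ` (Q - {B}))" by simp
    also have "\<dots> = insert B (Q - {B})" using img1 fB by simp
    also have "\<dots> = Q" using BQ by blast
    finally show ?thesis .
  qed
  have r: "insert ?n B - {?n} = B" using fB by simp
  have c1': "(insert ?n B = {?n}) = False" using c1 by simp
  have c2': "(card (insert ?n B) = 2 \<and> (\<exists>F\<in>?P. F \<noteq> insert ?n B \<and> Min (insert ?n B) \<in> F)) = False"
    using c2 by blast
  show ?thesis unfolding dec_def ext_def Let_def ins.case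
    by (simp only: b c1' c2' img r if_False)
qed

lemma dec_pr:
  assumes lp: "linked_partition k Q" and bS: "b \<in> Sng k Q"
  shows "dec (Suc k) (ext (Suc k) Q (Pr b)) = (Q, Pr b)"
proof -
  let ?n = "Suc k"
  let ?P = "insert {b, ?n} Q"
  have nQ: "\<forall>C\<in>Q. ?n \<notin> C" using lp_small[OF lp] by blast
  have bk: "b \<in> {1..k}" using sng_D[OF bS] by blast
  obtain F0 where F0: "F0 \<in> Q" "b \<in> F0" using sng_D[OF bS] by blast
  have b: "blk ?n ?P = {b, ?n}"
  proof (rule blk_eq)
    fix C assume "C \<in> ?P" "?n \<in> C"
    then show "C = {b, ?n}" using nQ by blast
  qed auto
  have c1: "{b, ?n} \<noteq> {?n}" using bk by auto
  have mb: "Min {b, ?n} = b" using bk by auto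
  have cb: "card {b, ?n} = 2" using bk by auto
  have F0n: "F0 \<noteq> {b, ?n}" using F0(1) nQ by blast
  have c2: "\<exists>F\<in>?P. F \<noteq> {b, ?n} \<and> Min {b, ?n} \<in> F"
    using F0 F0n unfolding mb by blast
  have r: "?P - {{b, ?n}} = Q" using nQ by blast
  have c1': "({b, ?n} = {?n}) = False" using c1 by simp
  have c2': "(card {b, ?n} = 2 \<and> (\<exists>F\<in>?P. F \<noteq> {b, ?n} \<and> b \<in> F)) = True"
    using c2 cb unfolding mb by simp
  show ?thesis unfolding dec_def ext_def Let_def ins.case
    by (simp only: b c1' c2' r mb if_False if_True)
qed

lemma dec_ext:
  assumes "linked_partition k Q" "x \<in> Idx k Q"
  shows "dec (Suc k) (ext (Suc k) Q x) = (Q, x)"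
  using assms dec_new dec_into dec_pr unfolding Idx_def by auto

lemma lp_sub:
  assumes lp: "linked_partition (Suc k) P" and QP: "Q \<subseteq> P" and nQ: "\<forall>C\<in>Q. Suc k \<notin> C"
    and u: "\<Union>Q = {1..k}"
  shows "linked_partition k Q"
proof -
  have "C \<noteq> {} \<and> C \<subseteq> {1..k}" if C: "C \<in> Q" for C
  proof -
    have "C \<noteq> {}" "C \<subseteq> {1..Suc k}" "Suc k \<notin> C" using lp_block[OF lp] C QP nQ by auto
    then have "\<forall>x\<in>C. x \<in> {1..Suc k} \<and> x \<noteq> Suc k" by blast
    then have "C \<subseteq> {1..k}" by auto
    then show ?thesis using \<open>C \<noteq> {}\<close> by simp
  qed
  moreover have "\<forall>E\<in>Q. \<forall>F\<in>Q. E \<noteq> F \<longrightarrow> nearly_disjoint E F"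
    using lp QP unfolding linked_partition_def by blast
  ultimately show ?thesis unfolding linked_partition_def using u by blast
qed

lemma nd_del:
  assumes nd: "nearly_disjoint Bn F" and nF: "n \<notin> F" and nB: "n \<in> Bn" and B: "B = Bn - {n}"
    and ne: "B \<noteq> {}" and fin: "finite Bn" and lt: "\<forall>x\<in>B. x < (n::nat)"
    and nc: "\<not> (card Bn = 2 \<and> Min Bn \<in> F)"
  shows "nearly_disjoint B F"
proof -
  have Bn: "Bn = insert n B" using B nB by blast
  have fB: "finite B" using fin B by simp
  have mB: "Min Bn = Min B" using min_insert_big[OF fB ne lt] Bn by simp
  have "n \<notin> B" using B by simp
  then have "card (insert n B) = card B + 1" using fB by simp
  then have cB: "card Bn = card B + 1" using Bn by simp
  have c0: "card B \<noteq> 0" using fB ne by simp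
  show ?thesis unfolding nearly_disjoint_def
  proof
    fix i assume i: "i \<in> B \<inter> F"
    then have "i \<in> Bn \<inter> F" using Bn by blast
    then have d: "(i = Min Bn \<and> card Bn > 1 \<and> i \<noteq> Min F) \<or> (i = Min F \<and> card F > 1 \<and> i \<noteq> Min Bn)"
      using nd unfolding nearly_disjoint_def by blast
    show "i = Min B \<and> 1 < card B \<and> i \<noteq> Min F \<or> i = Min F \<and> 1 < card F \<and> i \<noteq> Min B"
    proof (cases "i = Min Bn")
      case True
      then have "card B \<noteq> 1" using nc i cB by auto
      then show ?thesis using d True mB c0 by auto
    next
      case False
      then show ?thesis using d mB by auto
    qed
  qed
qed

lemma dec_ok:
  assumes lp: "linked_partition (Suc k) P"
  shows "linked_partition k (fst (dec (Suc k) P)) \<and> snd (dec (Suc k) P) \<in> Idx k (fst (dec (Suc k) P))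
     \<and> ext (Suc k) (fst (dec (Suc k) P)) (snd (dec (Suc k) P)) = P"
proof -
  let ?n = "Suc k"
  have "?n \<in> \<Union>P" using lp unfolding linked_partition_def by auto
  then obtain Bn where Bn: "Bn \<in> P" "?n \<in> Bn" by blast
  have uq: "\<forall>C\<in>P. ?n \<in> C \<longrightarrow> C = Bn" using lp_max_unique[OF lp _ _ Bn] by blast
  have bl: "blk ?n P = Bn"
  proof (rule blk_eq)
    fix C assume "C \<in> P" "?n \<in> C" then show "C = Bn" using uq by blast
  qed (use Bn in auto)
  have oth: "\<forall>C\<in>P - {Bn}. ?n \<notin> C" using uq by blast
  have fBn: "finite Bn" "Bn \<subseteq> {1..?n}" using lp_block[OF lp Bn(1)] by auto
  have UP: "\<Union>P = {1..?n}" using lp unfolding linked_partition_def by blast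
  show ?thesis
  proof (cases "Bn = {?n}")
    case True
    then have d: "dec ?n P = (P - {Bn}, New)" unfolding dec_def Let_def bl by simp
    have u: "\<Union>(P - {Bn}) = {1..k}"
    proof
      show "\<Union>(P - {Bn}) \<subseteq> {1..k}"
      proof
        fix i assume "i \<in> \<Union>(P - {Bn})"
        then obtain C where C: "C \<in> P - {Bn}" "i \<in> C" by blast
        then have "i \<in> {1..?n}" "i \<noteq> ?n" using UP oth by blast+
        then show "i \<in> {1..k}" by auto
      qed
    next
      show "{1..k} \<subseteq> \<Union>(P - {Bn})"
      proof
        fix i assume i: "i \<in> {1..k}"
        then have "i \<in> \<Union>P" using UP by auto
        then obtain C where C: "C \<in> P" "i \<in> C" by blast
        have "C \<noteq> Bn" using True C i by auto
        then show "i \<in> \<Union>(P - {Bn})" using C by blast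
      qed
    qed
    have "linked_partition k (P - {Bn})" using lp_sub[OF lp _ oth u] by blast
    moreover have "ext ?n (P - {Bn}) New = P" unfolding ext_def using True Bn by auto
    ultimately show ?thesis using d unfolding Idx_def by simp
  next
    case False
    note nsing = False
    show ?thesis
    proof (cases "card Bn = 2 \<and> (\<exists>F\<in>P. F \<noteq> Bn \<and> Min Bn \<in> F)")
      case True
      let ?b = "Min Bn"
      have d: "dec ?n P = (P - {Bn}, Pr ?b)" unfolding dec_def Let_def bl using nsing True by simp
      from True obtain F where F: "F \<in> P" "F \<noteq> Bn" "?b \<in> F" by blast
      have "Bn \<noteq> {}" using Bn by blast
      then have bB: "?b \<in> Bn" using fBn(1) by simp
      have bn: "?b \<noteq> ?n"
      proof
        assume "?b = ?n"
        then have "Bn = {?n}" using min_is_max[OF fBn Bn(2)] by simp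
        then show False using nsing by simp
      qed
      have Bn2: "Bn = {?b, ?n}"
      proof -
        have "{?b, ?n} \<subseteq> Bn" using bB Bn by blast
        moreover have "card {?b, ?n} = 2" using bn by simp
        ultimately show ?thesis using True fBn card_subset_eq by metis
      qed
      have bk: "?b \<in> {1..k}" using bB fBn bn by auto
      have u: "\<Union>(P - {Bn}) = {1..k}"
      proof
        show "\<Union>(P - {Bn}) \<subseteq> {1..k}"
        proof
          fix i assume "i \<in> \<Union>(P - {Bn})"
          then obtain C where C: "C \<in> P - {Bn}" "i \<in> C" by blast
          then have "i \<in> {1..?n}" "i \<noteq> ?n" using UP oth by blast+
          then show "i \<in> {1..k}" by auto
        qed
      next
        show "{1..k} \<subseteq> \<Union>(P - {Bn})"
        proof
          fix i assume i: "i \<in> {1..k}"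
          then have "i \<in> \<Union>P" using UP by auto
          then obtain C where C: "C \<in> P" "i \<in> C" by blast
          show "i \<in> \<Union>(P - {Bn})"
          proof (cases "C = Bn")
            case True
            then have "i = ?b" using C i Bn2 by auto
            then show ?thesis using F by blast
          next
            case False then show ?thesis using C by blast
          qed
        qed
      qed
      have lpQ: "linked_partition k (P - {Bn})" using lp_sub[OF lp _ oth u] by blast
      have nm: "?b \<noteq> Min F" using lp_nd[OF lp Bn(1) F(1) F(2)[symmetric] bB F(3)] by blast
      have "?b \<in> Sng k (P - {Bn})"
      proof (rule sng_I[OF bk, of F])
        fix G assume "G \<in> P - {Bn}" "?b \<in> G"
        then show "G = F" using lp_three[OF lp Bn(1) F(1), of G ?b] F bB by blast
      qed (use F nm in auto)
      moreover have "ext ?n (P - {Bn}) (Pr ?b) = P" unfolding ext_def using Bn2 Bn by auto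
      ultimately show ?thesis using d lpQ unfolding Idx_def by simp
    next
      case False
      let ?B = "Bn - {?n}"
      have d: "dec ?n P = ((\<lambda>C. C - {?n}) ` P, Into ?B)" unfolding dec_def Let_def bl using nsing False by simp
      have img: "(\<lambda>C. C - {?n}) ` P = insert ?B (P - {Bn})"
      proof -
        have "(\<lambda>C. C - {?n}) ` (P - {Bn}) = P - {Bn}"
          by (rule image_cong[where g = id, simplified]) (use oth in auto)
        moreover have "P = insert Bn (P - {Bn})" using Bn by blast
        ultimately show ?thesis by (metis image_insert)
      qed
      have Bne: "?B \<noteq> {}" using nsing Bn by blast
      have Blt: "\<forall>x\<in>?B. x < ?n" using fBn by auto
      have Bsub: "?B \<subseteq> {1..k}" using fBn by auto
      have mB: "Min Bn = Min ?B" using min_insert_big[of ?B ?n] Bne Blt fBn Bn by (metis finite_Diff insert_Diff)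
      have BnP: "?B \<notin> P"
      proof
        assume BP: "?B \<in> P"
        have "?B \<noteq> Bn" using Bn by blast
        moreover have "Min ?B \<in> ?B" using Bne fBn(1) by (intro Min_in) simp_all
        ultimately show False using lp_nd[OF lp BP Bn(1), of "Min ?B"] mB by auto
      qed
      have ndB: "nearly_disjoint ?B F" if F: "F \<in> P - {Bn}" for F
      proof (rule nd_del[OF _ _ Bn(2) refl Bne fBn(1) Blt])
        show "nearly_disjoint Bn F" using lp F Bn unfolding linked_partition_def by blast
        show "?n \<notin> F" using oth F by blast
        show "\<not> (card Bn = 2 \<and> Min Bn \<in> F)" using False F by blast
      qed
      have lpQ: "linked_partition k (insert ?B (P - {Bn}))"
      proof -
        have bl1: "\<forall>C\<in>insert ?B (P - {Bn}). C \<noteq> {} \<and> C \<subseteq> {1..k}"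
        proof
          fix C assume "C \<in> insert ?B (P - {Bn})"
          then show "C \<noteq> {} \<and> C \<subseteq> {1..k}"
          proof
            assume "C = ?B" then show ?thesis using Bne Bsub by simp
          next
            assume C: "C \<in> P - {Bn}"
            have "C \<noteq> {}" "C \<subseteq> {1..Suc k}" "Suc k \<notin> C" using lp_block[OF lp] C oth by auto
            then have "\<forall>x\<in>C. x \<in> {1..Suc k} \<and> x \<noteq> Suc k" by blast
            then have "C \<subseteq> {1..k}" by auto
            then show ?thesis using \<open>C \<noteq> {}\<close> by simp
          qed
        qed
        have "\<Union>(insert ?B (P - {Bn})) = \<Union>P - {?n}" using oth Bn by blast
        then have u: "\<Union>(insert ?B (P - {Bn})) = {1..k}" using UP by auto
        have nd: "\<forall>E\<in>insert ?B (P - {Bn}). \<forall>F\<in>insert ?B (P - {Bn}). E \<noteq> F \<longrightarrow> nearly_disjoint E F"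
        proof (intro ballI impI)
          fix E F assume E: "E \<in> insert ?B (P - {Bn})" and F: "F \<in> insert ?B (P - {Bn})" and ne: "E \<noteq> F"
          show "nearly_disjoint E F"
          proof (cases "E \<in> P - {Bn} \<and> F \<in> P - {Bn}")
            case True then show ?thesis using lp ne unfolding linked_partition_def by blast
          next
            case False
            then have "(E = ?B \<and> F \<in> P - {Bn}) \<or> (F = ?B \<and> E \<in> P - {Bn})" using E F ne by blast
            then show ?thesis using ndB nd_sym by blast
          qed
        qed
        show ?thesis unfolding linked_partition_def using bl1 u nd by blast
      qed
      have "ext ?n (insert ?B (P - {Bn})) (Into ?B) = P"
      proof -
        have "insert ?B (P - {Bn}) - {?B} = P - {Bn}" using BnP by blast
        moreover have "insert ?n ?B = Bn" using Bn by blast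
        ultimately show ?thesis unfolding ext_def using Bn by auto
      qed
      then show ?thesis using d img lpQ unfolding Idx_def by simp
    qed
  qed
qed



definition W :: "nat set set \<Rightarrow> nat" where
  "W P = (\<Prod>B\<in>P. fact (card B - 1))"

definition AR :: "nat set set \<Rightarrow> (nat set \<Rightarrow> nat list set) set" where
  "AR P = {A. (\<forall>B\<in>P. cyclic_arrangement B (A B)) \<and> (\<forall>B. B \<notin> P \<longrightarrow> A B = {})}"

definition LPs :: "nat \<Rightarrow> nat set set set" where
  "LPs n = {P. linked_partition n P}"

lemma LPs_finite: "finite (LPs n)"
proof -
  have "LPs n \<subseteq> Pow (Pow {1..n})" unfolding LPs_def using lp_block by blast
  then show ?thesis by (rule finite_subset) simp
qed

lemma AR_bij:
  assumes lp: "linked_partition n P"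
  shows "bij_betw (\<lambda>A. restrict A P) (AR P) (PiE P (\<lambda>B. {C. cyclic_arrangement B C}))"
proof (rule bij_betw_byWitness[where f' = "\<lambda>g B. if B \<in> P then g B else {}"])
  show "\<forall>a\<in>AR P. (\<lambda>B. if B \<in> P then restrict a P B else {}) = a"
    unfolding AR_def by (auto simp: fun_eq_iff)
  show "\<forall>a'\<in>PiE P (\<lambda>B. {C. cyclic_arrangement B C}). restrict (\<lambda>B. if B \<in> P then a' B else {}) P = a'"
    by (auto simp: fun_eq_iff PiE_def extensional_def)
  show "(\<lambda>A. restrict A P) ` AR P \<subseteq> PiE P (\<lambda>B. {C. cyclic_arrangement B C})"
    unfolding AR_def by auto
  show "(\<lambda>g B. if B \<in> P then g B else {}) ` PiE P (\<lambda>B. {C. cyclic_arrangement B C}) \<subseteq> AR P"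
    unfolding AR_def by (auto simp: PiE_def Pi_def)
qed

lemma AR_card:
  assumes lp: "linked_partition n P"
  shows "card (AR P) = W P" "finite (AR P)"
proof -
  have fP: "finite P" using lp_finite[OF lp] .
  have fin: "\<And>B. B \<in> P \<Longrightarrow> finite {C. cyclic_arrangement B C}"
    using ca_card(2) lp_block[OF lp] by blast
  have "card (AR P) = card (PiE P (\<lambda>B. {C. cyclic_arrangement B C}))"
    using bij_betw_same_card[OF AR_bij[OF lp]] .
  also have "\<dots> = (\<Prod>B\<in>P. card {C. cyclic_arrangement B C})" by (rule card_PiE[OF fP])
  also have "\<dots> = W P" unfolding W_def
    by (rule prod.cong) (use ca_card(1) lp_block[OF lp] in auto)
  finally show "card (AR P) = W P" .
  have "finite (PiE P (\<lambda>B. {C. cyclic_arrangement B C}))" by (rule finite_PiE[OF fP fin])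
  then show "finite (AR P)" using bij_betw_finite[OF AR_bij[OF lp]] by blast
qed

lemma f_sum: "f_lc n m = (\<Sum>P\<in>{P\<in>LPs n. card (singly_covered_minimal n P) = m}. W P)"
proof -
  let ?L = "{P\<in>LPs n. card (singly_covered_minimal n P) = m}"
  have eq: "{(P, A). linked_cycle n P A \<and> card (singly_covered_minimal n P) = m} = Sigma ?L AR"
    unfolding linked_cycle_def AR_def LPs_def by auto
  have fL: "finite ?L" using LPs_finite by simp
  have "card (Sigma ?L AR) = (\<Sum>P\<in>?L. card (AR P))"
    using card_SigmaI[OF fL] AR_card(2) unfolding LPs_def by auto
  also have "\<dots> = (\<Sum>P\<in>?L. W P)" by (rule sum.cong) (use AR_card(1) LPs_def in auto)
  finally show ?thesis unfolding f_lc_def eq .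
qed



abbreviation scm where "scm \<equiv> singly_covered_minimal"

lemma scm_mem: "i \<in> scm n P \<longleftrightarrow> i \<in> {1..n} \<and> card {C\<in>P. i\<in>C} = 1 \<and> (\<forall>C\<in>P. i\<in>C \<longrightarrow> i = Min C)"
  unfolding singly_covered_minimal_def by blast

lemma Sng_finite: "finite (Sng k Q)"
proof -
  have "Sng k Q \<subseteq> {1..k}" unfolding Sng_def by blast
  then show ?thesis using finite_subset by blast
qed

lemma Idx_finite: "linked_partition k Q \<Longrightarrow> finite (Idx k Q)"
proof -
  assume lp: "linked_partition k Q"
  have "Sng k Q \<subseteq> {1..k}" unfolding Sng_def by blast
  then have "finite (Sng k Q)" using finite_subset by blast
  then show ?thesis unfolding Idx_def using lp_finite[OF lp] by simp
qed

lemma main_sum: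
  "(\<Sum>P\<in>LPs (Suc k). h P) = (\<Sum>Q\<in>LPs k. \<Sum>x\<in>Idx k Q. h (ext (Suc k) Q x))"
proof -
  let ?S = "Sigma (LPs k) (Idx k)"
  let ?e = "\<lambda>(Q, x). ext (Suc k) Q x"
  have inj: "inj_on ?e ?S"
  proof (rule inj_on_inverseI[where g = "dec (Suc k)"])
    fix y assume "y \<in> ?S"
    then show "dec (Suc k) (?e y) = y" using dec_ext unfolding LPs_def by auto
  qed
  have img: "?e ` ?S = LPs (Suc k)"
  proof
    show "?e ` ?S \<subseteq> LPs (Suc k)" using ext_lp unfolding LPs_def by auto
  next
    show "LPs (Suc k) \<subseteq> ?e ` ?S"
    proof
      fix P assume "P \<in> LPs (Suc k)"
      then have d: "linked_partition k (fst (dec (Suc k) P)) \<and> snd (dec (Suc k) P) \<in> Idx k (fst (dec (Suc k) P))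
        \<and> ext (Suc k) (fst (dec (Suc k) P)) (snd (dec (Suc k) P)) = P" using dec_ok unfolding LPs_def by blast
      then have "dec (Suc k) P \<in> ?S" unfolding LPs_def by (cases "dec (Suc k) P") auto
      moreover have "P = ?e (dec (Suc k) P)" using d by (simp add: case_prod_beta)
      ultimately show "P \<in> ?e ` ?S" by (rule rev_image_eqI)
    qed
  qed
  have "(\<Sum>P\<in>LPs (Suc k). h P) = (\<Sum>y\<in>?S. h (?e y))"
    using sum.reindex[OF inj, of h] img by simp
  also have "\<dots> = (\<Sum>(Q, x)\<in>?S. h (ext (Suc k) Q x))"
    by (rule sum.cong) auto
  also have "\<dots> = (\<Sum>Q\<in>LPs k. \<Sum>x\<in>Idx k Q. h (ext (Suc k) Q x))"
    by (rule sum.Sigma[symmetric]) (use LPs_finite Idx_finite LPs_def in auto)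
  finally show ?thesis .
qed

lemma idx_sum:
  assumes lp: "linked_partition k Q"
  shows "(\<Sum>x\<in>Idx k Q. h x) = h New + (\<Sum>B\<in>Q. h (Into B)) + (\<Sum>b\<in>Sng k Q. h (Pr b))"
proof -
  have fQ: "finite Q" using lp_finite[OF lp] .
  have fS: "finite (Sng k Q)" by (rule Sng_finite)
  have "(\<Sum>x\<in>Idx k Q. h x) = h New + (\<Sum>x\<in>Into ` Q \<union> Pr ` Sng k Q. h x)"
    unfolding Idx_def using fQ fS by (subst sum.insert) auto
  also have "(\<Sum>x\<in>Into ` Q \<union> Pr ` Sng k Q. h x) = (\<Sum>x\<in>Into ` Q. h x) + (\<Sum>x\<in>Pr ` Sng k Q. h x)"
    by (rule sum.union_disjoint) (use fQ fS in auto)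
  also have "(\<Sum>x\<in>Into ` Q. h x) = (\<Sum>B\<in>Q. h (Into B))"
    by (rule sum.reindex[unfolded comp_def]) (simp add: inj_on_def)
  also have "(\<Sum>x\<in>Pr ` Sng k Q. h x) = (\<Sum>b\<in>Sng k Q. h (Pr b))"
    by (rule sum.reindex[unfolded comp_def]) (simp add: inj_on_def)
  finally show ?thesis by (simp add: add.assoc)
qed

lemma cond_eq:
  assumes fin: "finite {C\<in>Q. i\<in>C}"
    and img: "{C\<in>P. i\<in>C} = \<phi> ` {C\<in>Q. i\<in>C}" and inj: "inj_on \<phi> {C\<in>Q. i\<in>C}"
    and mn: "\<forall>C\<in>{C\<in>Q. i\<in>C}. Min (\<phi> C) = Min C"
  shows "(card {C\<in>P. i\<in>C} = 1 \<and> (\<forall>C\<in>P. i\<in>C \<longrightarrow> i = Min C))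
       = (card {C\<in>Q. i\<in>C} = 1 \<and> (\<forall>C\<in>Q. i\<in>C \<longrightarrow> i = Min C))"
proof -
  have c: "card {C\<in>P. i\<in>C} = card {C\<in>Q. i\<in>C}" using img card_image[OF inj] by simp
  have "(\<forall>C\<in>P. i\<in>C \<longrightarrow> i = Min C) = (\<forall>C\<in>{C\<in>P. i\<in>C}. i = Min C)" by blast
  also have "\<dots> = (\<forall>C\<in>{C\<in>Q. i\<in>C}. i = Min (\<phi> C))" unfolding img by blast
  also have "\<dots> = (\<forall>C\<in>{C\<in>Q. i\<in>C}. i = Min C)" using mn by auto
  also have "\<dots> = (\<forall>C\<in>Q. i\<in>C \<longrightarrow> i = Min C)" by blast
  finally show ?thesis using c by simp
qed

lemma scm_new:
  assumes lp: "linked_partition k Q"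
  shows "scm (Suc k) (ext (Suc k) Q New) = insert (Suc k) (scm k Q)" "Suc k \<notin> scm k Q"
proof -
  let ?n = "Suc k"
  let ?P = "insert {?n} Q"
  have nQ: "\<forall>C\<in>Q. ?n \<notin> C" using lp_small[OF lp] by blast
  have fQ: "finite Q" using lp_finite[OF lp] .
  show "?n \<notin> scm k Q" unfolding singly_covered_minimal_def by simp
  have "i \<in> scm ?n ?P \<longleftrightarrow> i \<in> insert ?n (scm k Q)" for i
  proof (cases "i = ?n")
    case True
    have e: "{C\<in>?P. ?n\<in>C} = {{?n}}" using nQ by blast
    then have "card {C\<in>?P. ?n\<in>C} = 1" by simp
    moreover have "\<forall>C\<in>?P. ?n\<in>C \<longrightarrow> ?n = Min C"
    proof (intro ballI impI)
      fix C assume "C \<in> ?P" "?n \<in> C"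
      then have "C \<in> {C\<in>?P. ?n\<in>C}" by blast
      then have "C = {?n}" unfolding e by blast
      then show "?n = Min C" by simp
    qed
    moreover have "?n \<in> {1..?n}" by simp
    ultimately have "?n \<in> scm ?n ?P" unfolding scm_mem by blast
    then show ?thesis using True by simp
  next
    case False
    have e: "{C\<in>?P. i\<in>C} = id ` {C\<in>Q. i\<in>C}" using False by auto
    have "(card {C\<in>?P. i\<in>C} = 1 \<and> (\<forall>C\<in>?P. i\<in>C \<longrightarrow> i = Min C))
       = (card {C\<in>Q. i\<in>C} = 1 \<and> (\<forall>C\<in>Q. i\<in>C \<longrightarrow> i = Min C))"
      by (rule cond_eq[OF _ e]) (use fQ in auto)
    moreover have "(i \<in> {1..?n}) = (i \<in> {1..k})" using False by auto
    ultimately show ?thesis unfolding scm_mem insert_iff using False by blast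
  qed
  then show "scm ?n (ext ?n Q New) = insert ?n (scm k Q)" unfolding ext_def by auto
qed

lemma scm_into:
  assumes lp: "linked_partition k Q" and BQ: "B \<in> Q"
  shows "scm (Suc k) (ext (Suc k) Q (Into B)) = scm k Q"
proof -
  let ?n = "Suc k"
  let ?P = "insert (insert ?n B) (Q - {B})"
  have nQ: "\<forall>C\<in>Q. ?n \<notin> C" using lp_small[OF lp] by blast
  have fQ: "finite Q" using lp_finite[OF lp] .
  have fB: "finite B" "B \<noteq> {}" "\<forall>x\<in>B. x < ?n" "?n \<notin> B" using lp_small[OF lp BQ] by auto
  have mB: "Min (insert ?n B) = Min B" using min_insert_big fB by blast
  have "i \<in> scm ?n ?P \<longleftrightarrow> i \<in> scm k Q" for i
  proof (cases "i = ?n")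
    case True
    have "Min B \<in> B" using fB by simp
    then have "?n \<noteq> Min (insert ?n B)" using mB fB by fastforce
    then have "?n \<notin> scm ?n ?P" unfolding singly_covered_minimal_def by blast
    moreover have "?n \<notin> scm k Q" unfolding singly_covered_minimal_def by simp
    ultimately show ?thesis using True by simp
  next
    case False
    let ?phi = "\<lambda>C. if C = B then insert ?n B else C"
    have e: "{C\<in>?P. i\<in>C} = ?phi ` {C\<in>Q. i\<in>C}"
    proof
      show "{C\<in>?P. i\<in>C} \<subseteq> ?phi ` {C\<in>Q. i\<in>C}"
      proof
        fix C assume C: "C \<in> {C\<in>?P. i\<in>C}"
        show "C \<in> ?phi ` {C\<in>Q. i\<in>C}"
        proof (cases "C = insert ?n B")
          case True
          then have "i \<in> B" using C False by blast
          then show ?thesis using True BQ by force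
        next
          case F: False
          then have "C \<in> Q" "C \<noteq> B" "i \<in> C" using C by auto
          then show ?thesis by force
        qed
      qed
    next
      show "?phi ` {C\<in>Q. i\<in>C} \<subseteq> {C\<in>?P. i\<in>C}" by auto
    qed
    have inj: "inj_on ?phi {C\<in>Q. i\<in>C}"
    proof (rule inj_onI)
      fix C D assume C: "C \<in> {C\<in>Q. i\<in>C}" and D: "D \<in> {C\<in>Q. i\<in>C}" and eq: "?phi C = ?phi D"
      have nC: "?n \<notin> C" "?n \<notin> D" using nQ C D by auto
      show "C = D"
      proof (cases "C = B"; cases "D = B")
        assume "C = B" "D \<noteq> B"
        then have "D = insert ?n B" using eq by simp
        then show "C = D" using nC by blast
      next
        assume "C \<noteq> B" "D = B"
        then have "C = insert ?n B" using eq by simp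
        then show "C = D" using nC by blast
      qed (use eq in auto)
    qed
    have mn: "\<forall>C\<in>{C\<in>Q. i\<in>C}. Min (?phi C) = Min C" using mB by auto
    have "(card {C\<in>?P. i\<in>C} = 1 \<and> (\<forall>C\<in>?P. i\<in>C \<longrightarrow> i = Min C))
       = (card {C\<in>Q. i\<in>C} = 1 \<and> (\<forall>C\<in>Q. i\<in>C \<longrightarrow> i = Min C))"
      by (rule cond_eq[OF _ e inj mn]) (use fQ in auto)
    moreover have "(i \<in> {1..?n}) = (i \<in> {1..k})" using False by auto
    ultimately show ?thesis unfolding scm_mem by blast
  qed
  then show ?thesis unfolding ext_def by auto
qed

lemma scm_pr:
  assumes lp: "linked_partition k Q" and bS: "b \<in> Sng k Q"
  shows "scm (Suc k) (ext (Suc k) Q (Pr b)) = scm k Q"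
proof -
  let ?n = "Suc k"
  let ?P = "insert {b, ?n} Q"
  have nQ: "\<forall>C\<in>Q. ?n \<notin> C" using lp_small[OF lp] by blast
  have fQ: "finite Q" using lp_finite[OF lp] .
  have bk: "b \<in> {1..k}" using sng_D[OF bS] by blast
  obtain F0 where F0: "F0 \<in> Q" "b \<in> F0" "b \<noteq> Min F0" using sng_D[OF bS] by blast
  have mb: "Min {b, ?n} = b" using bk by auto
  have "i \<in> scm ?n ?P \<longleftrightarrow> i \<in> scm k Q" for i
  proof (cases "i = ?n \<or> i = b")
    case True
    then show ?thesis
    proof
      assume i: "i = ?n"
      have "{b, ?n} \<in> ?P" "?n \<in> {b, ?n}" "?n \<noteq> Min {b, ?n}" using mb bk by auto
      then have "?n \<notin> scm ?n ?P" unfolding singly_covered_minimal_def by blast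
      moreover have "?n \<notin> scm k Q" unfolding singly_covered_minimal_def by simp
      ultimately show ?thesis using i by simp
    next
      assume i: "i = b"
      have "F0 \<in> ?P" using F0 by simp
      then have "b \<notin> scm ?n ?P" using F0 unfolding singly_covered_minimal_def by blast
      moreover have "b \<notin> scm k Q" using F0 unfolding singly_covered_minimal_def by blast
      ultimately show ?thesis using i by simp
    qed
  next
    case False
    have e: "{C\<in>?P. i\<in>C} = id ` {C\<in>Q. i\<in>C}" using False by auto
    have "(card {C\<in>?P. i\<in>C} = 1 \<and> (\<forall>C\<in>?P. i\<in>C \<longrightarrow> i = Min C))
       = (card {C\<in>Q. i\<in>C} = 1 \<and> (\<forall>C\<in>Q. i\<in>C \<longrightarrow> i = Min C))"
      by (rule cond_eq[OF _ e]) (use fQ in auto)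
    moreover have "(i \<in> {1..?n}) = (i \<in> {1..k})" using False by auto
    ultimately show ?thesis unfolding scm_mem by blast
  qed
  then show ?thesis unfolding ext_def by auto
qed

lemma W_new: "linked_partition k Q \<Longrightarrow> W (ext (Suc k) Q New) = W Q"
proof -
  assume lp: "linked_partition k Q"
  have "{Suc k} \<notin> Q" using lp_small[OF lp] by blast
  then show ?thesis unfolding W_def ext_def using lp_finite[OF lp] by simp
qed

lemma W_pr: "linked_partition k Q \<Longrightarrow> b \<in> Sng k Q \<Longrightarrow> W (ext (Suc k) Q (Pr b)) = W Q"
proof -
  assume lp: "linked_partition k Q" and bS: "b \<in> Sng k Q"
  have bk: "b \<in> {1..k}" using sng_D[OF bS] by blast
  have "{b, Suc k} \<notin> Q" using lp_small[OF lp] by blast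
  moreover have "card {b, Suc k} = 2" using bk by auto
  ultimately show ?thesis unfolding W_def ext_def using lp_finite[OF lp] by simp
qed

lemma W_into: "linked_partition k Q \<Longrightarrow> B \<in> Q \<Longrightarrow> W (ext (Suc k) Q (Into B)) = card B * W Q"
proof -
  assume lp: "linked_partition k Q" and BQ: "B \<in> Q"
  have fQ: "finite Q" using lp_finite[OF lp] .
  have fB: "finite B" "B \<noteq> {}" "Suc k \<notin> B" using lp_small[OF lp BQ] by auto
  obtain j where j: "card B = Suc j" using fB by (metis card_0_eq not0_implies_Suc)
  have ni: "insert (Suc k) B \<notin> Q - {B}" using lp_small[OF lp] by blast
  have "W (ext (Suc k) Q (Into B)) = fact (card (insert (Suc k) B) - 1) * (\<Prod>C\<in>Q - {B}. fact (card C - 1))"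
    unfolding W_def ext_def using ni fQ by simp
  also have "\<dots> = fact (Suc j) * (\<Prod>C\<in>Q - {B}. fact (card C - 1))" using fB j by simp
  also have "W Q = fact j * (\<Prod>C\<in>Q - {B}. fact (card C - 1))"
    unfolding W_def using prod.remove[OF fQ BQ, of "\<lambda>C. fact (card C - 1)"] j by simp
  ultimately show ?thesis using j by (simp add: fact_Suc algebra_simps)
qed

lemma count_id:
  assumes lp: "linked_partition k Q"
  shows "(\<Sum>B\<in>Q. card B) + card (Sng k Q) + card (scm k Q) = 2 * k"
proof -
  let ?U = "{1..k}"
  let ?c = "\<lambda>i. card {B\<in>Q. i\<in>B}"
  have fQ: "finite Q" using lp_finite[OF lp] .
  have s1: "(\<Sum>B\<in>Q. card B) = (\<Sum>i\<in>?U. ?c i)"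
  proof -
    have "(\<Sum>B\<in>Q. card B) = (\<Sum>B\<in>Q. \<Sum>i\<in>?U. if i \<in> B then 1 else 0)"
    proof (rule sum.cong[OF refl])
      fix B assume "B \<in> Q"
      then have "B \<subseteq> ?U" using lp_block[OF lp] by blast
      then have "{i\<in>?U. i \<in> B} = B" by blast
      then show "card B = (\<Sum>i\<in>?U. if i \<in> B then 1 else 0)"
        using sum.inter_filter[of ?U "\<lambda>_. (1::nat)" "\<lambda>i. i \<in> B"] by simp
    qed
    also have "\<dots> = (\<Sum>i\<in>?U. \<Sum>B\<in>Q. if i \<in> B then 1 else 0)" by (rule sum.swap)
    also have "\<dots> = (\<Sum>i\<in>?U. ?c i)"
      using sum.inter_filter[OF fQ, of "\<lambda>_. (1::nat)"] by simp
    finally show ?thesis .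
  qed
  have un: "Sng k Q \<union> scm k Q = {i\<in>?U. ?c i = 1}"
    unfolding Sng_def singly_covered_minimal_def by blast
  have di: "Sng k Q \<inter> scm k Q = {}"
    unfolding Sng_def singly_covered_minimal_def by blast
  have fin: "finite (Sng k Q)" "finite (scm k Q)"
    unfolding Sng_def singly_covered_minimal_def by auto
  have s2: "card (Sng k Q) + card (scm k Q) = (\<Sum>i\<in>?U. if ?c i = 1 then 1 else 0)"
    using card_Un_disjoint[OF fin di] un sum.inter_filter[of ?U "\<lambda>_. (1::nat)" "\<lambda>i. ?c i = 1"] by simp
  have "(\<Sum>i\<in>?U. ?c i) + (\<Sum>i\<in>?U. if ?c i = 1 then 1 else 0) = (\<Sum>i\<in>?U. ?c i + (if ?c i = 1 then 1 else 0))"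
    by (simp add: sum.distrib)
  also have "\<dots> = (\<Sum>i\<in>?U. 2)"
  proof (rule sum.cong[OF refl])
    fix i assume "i \<in> ?U"
    then show "?c i + (if ?c i = 1 then 1 else 0) = 2" using lp_cover[OF lp] by fastforce
  qed
  also have "\<dots> = 2 * k" by simp
  finally show ?thesis using s1 s2 by linarith
qed



lemma f_g: "f_lc n m = (\<Sum>P\<in>LPs n. if card (scm n P) = m then W P else 0)"
  unfolding f_sum by (simp add: sum.inter_filter[OF LPs_finite])

lemma perQ:
  assumes lp: "linked_partition k Q"
  shows "(\<Sum>x\<in>Idx k Q. (\<lambda>P. if card (scm (Suc k) P) = m then W P else 0) (ext (Suc k) Q x))
     = (if card (scm k Q) + 1 = m then W Q else 0) + (if card (scm k Q) = m then (2 * k - m) * W Q else 0)"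
proof -
  let ?h = "\<lambda>P. if card (scm (Suc k) P) = m then W P else 0"
  let ?s = "card (scm k Q)"
  have fs: "finite (scm k Q)" unfolding singly_covered_minimal_def by simp
  have h1: "?h (ext (Suc k) Q New) = (if ?s + 1 = m then W Q else 0)"
    using scm_new[OF lp] W_new[OF lp] fs by simp
  have h2: "(\<Sum>B\<in>Q. ?h (ext (Suc k) Q (Into B))) = (if ?s = m then (\<Sum>B\<in>Q. card B) * W Q else 0)"
  proof -
    have "(\<Sum>B\<in>Q. ?h (ext (Suc k) Q (Into B))) = (\<Sum>B\<in>Q. if ?s = m then card B * W Q else 0)"
      by (rule sum.cong[OF refl]) (simp add: scm_into[OF lp] W_into[OF lp])
    also have "\<dots> = (if ?s = m then (\<Sum>B\<in>Q. card B) * W Q else 0)"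
      by (simp add: sum_distrib_right)
    finally show ?thesis .
  qed
  have h3: "(\<Sum>b\<in>Sng k Q. ?h (ext (Suc k) Q (Pr b))) = (if ?s = m then card (Sng k Q) * W Q else 0)"
  proof -
    have "(\<Sum>b\<in>Sng k Q. ?h (ext (Suc k) Q (Pr b))) = (\<Sum>b\<in>Sng k Q. if ?s = m then W Q else 0)"
      by (rule sum.cong[OF refl]) (simp add: scm_pr[OF lp] W_pr[OF lp])
    also have "\<dots> = (if ?s = m then card (Sng k Q) * W Q else 0)" by simp
    finally show ?thesis .
  qed
  have ci: "(\<Sum>B\<in>Q. card B) + card (Sng k Q) = 2 * k - ?s" using count_id[OF lp] by simp
  have "(if ?s = m then (\<Sum>B\<in>Q. card B) * W Q else 0) + (if ?s = m then card (Sng k Q) * W Q else 0)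
      = (if ?s = m then (2 * k - m) * W Q else 0)"
    using ci by (auto simp: add_mult_distrib[symmetric])
  then show ?thesis unfolding idx_sum[OF lp] h1 h2 h3 by simp
qed

lemma rec_nat: "f_lc (Suc k) m = (if m = 0 then 0 else f_lc k (m - 1)) + (2 * k - m) * f_lc k m"
proof -
  have "f_lc (Suc k) m = (\<Sum>Q\<in>LPs k. (if card (scm k Q) + 1 = m then W Q else 0)
        + (if card (scm k Q) = m then (2 * k - m) * W Q else 0))"
    unfolding f_g main_sum by (rule sum.cong[OF refl]) (use perQ LPs_def in auto)
  also have "\<dots> = (\<Sum>Q\<in>LPs k. (if card (scm k Q) + 1 = m then W Q else 0)
        + (2 * k - m) * (if card (scm k Q) = m then W Q else 0))"
    by (rule sum.cong[OF refl]) simp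
  also have "\<dots> = (\<Sum>Q\<in>LPs k. if card (scm k Q) + 1 = m then W Q else 0)
        + (2 * k - m) * (\<Sum>Q\<in>LPs k. if card (scm k Q) = m then W Q else 0)"
    by (simp only: sum.distrib sum_distrib_left)
  also have "(\<Sum>Q\<in>LPs k. if card (scm k Q) + 1 = m then W Q else 0) = (if m = 0 then 0 else f_lc k (m - 1))"
    unfolding f_g by (cases m) auto
  finally show ?thesis unfolding f_g by simp
qed

lemma LPs0: "LPs 0 = {{}}"
proof -
  have "linked_partition 0 P \<longleftrightarrow> P = {}" for P
    unfolding linked_partition_def nearly_disjoint_def by auto
  then show ?thesis unfolding LPs_def by auto
qed

lemma f0: "f_lc 0 m = (if m = 0 then 1 else 0)"
proof -
  have "scm 0 {} = {}" unfolding singly_covered_minimal_def by simp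
  then show ?thesis unfolding f_g LPs0 W_def by simp
qed

lemma fn0: "f_lc (Suc k) 0 = 0"
  by (induction k) (simp_all add: rec_nat f0)

lemma fsmall: "n < m \<Longrightarrow> f_lc n m = 0"
proof (induction n arbitrary: m)
  case 0 then show ?case by (simp add: f0)
next
  case (Suc k)
  then show ?case by (simp add: rec_nat)
qed

theorem proposition4p5:
  shows "f_lc 1 1 = 1
    \<and> (\<forall>n\<ge>1. f_lc n 0 = 0)
    \<and> (\<forall>n m. n < m \<longrightarrow> f_lc n m = 0)
    \<and> (\<forall>n\<ge>2. \<forall>m\<ge>1. int (f_lc n m) =
          (2 * (int n - 1) - int m) * int (f_lc (n - 1) m) + int (f_lc (n - 1) (m - 1)))"
proof (intro conjI allI impI)
  show "f_lc 1 1 = 1" using rec_nat[of 0 1] f0 by simp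
next
  fix n :: nat assume "n \<ge> 1"
  then obtain k where "n = Suc k" by (cases n) auto
  then show "f_lc n 0 = 0" using fn0 by simp
next
  fix n m :: nat assume "n < m" then show "f_lc n m = 0" by (rule fsmall)
next
  fix n m :: nat assume n: "n \<ge> 2" and m: "m \<ge> 1"
  then obtain k where k: "n = Suc k" by (cases n) auto
  have r: "f_lc n m = f_lc k (m - 1) + (2 * k - m) * f_lc k m" using rec_nat[of k m] m k by simp
  show "int (f_lc n m) = (2 * (int n - 1) - int m) * int (f_lc (n - 1) m) + int (f_lc (n - 1) (m - 1))"
  proof (cases "m \<le> 2 * k")
    case True
    then have "int (2 * k - m) = 2 * int k - int m" by simp
    then show ?thesis using r k by simp
  next
    case False
    then have "f_lc k m = 0" using fsmall by simp
    then show ?thesis using r k by simp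
  qed
qed

end
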